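(* Let $N\geq 1$ and let $a_1,\dots,a_N$ be real numbers with $1<a_1<a_2<\cdots<a_N$; set $a_0=1$ and $\mathbf{a}=(a_1,\dots,a_N)$. Let $\delta>0$. Then: (a) If $f:[0,\delta]\to\mathbb{R}$ is a solution of $f(x)+f(a_1x)+\cdots+f(a_Nx)=0$ on $[0,\delta]$ and $f\in C^{(m(\mathbf{a}))}[0,\delta]$, then $f\equiv 0$ on $[0,\delta]$. (b) If $f:[-\delta,0]\to\mathbb{R}$ is a solution of $f(x)+f(a_1x)+\cdots+f(a_Nx)=0$ on $[-\delta,0]$ and $f\in C^{(m(\mathbf{a}))}[-\delta,0]$, then $f\equiv 0$ on $[-\delta,0]$.
   Context: For an interval $I\subseteq\mathbb{R}$, a function $f:I\to\mathbb{R}$ is called a solution of $f(x)+f(a_1x)+\cdots+f(a_Nx)=0$ on $I$ if $f(x)+f(a_1x)+\cdots+f(a_Nx)=0$ holds for every $x$ such that $\{x,a_1x,\dots,a_Nx\}\subseteq I$. With $a_0=1$, define the natural number $m(\mathbf{a})=\min\{m\in\mathbb{N}: \sum_{k=0}^{N-1}(a_k/a_N)^m<1\}$ (well defined since $0<a_k/a_N<1$ for $0\le k\le N-1$). $C^{(m)}[\alpha,\beta]$ denotes the $m$ times continuously differentiable functions on $[\alpha,\beta]$ (one-sided derivatives at endpoints). *)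

theory Defs
  imports "HOL-Analysis.Analysis"
begin

text \<open>f is a solution of f(x) + f(a_1 x) + ... + f(a_N x) = 0 on the interval I
  (with a 0 = 1): the equation holds for every x with all a_k x in I.\<close>
definition is_solution_on :: "nat \<Rightarrow> (nat \<Rightarrow> real) \<Rightarrow> real set \<Rightarrow> (real \<Rightarrow> real) \<Rightarrow> bool" where
  "is_solution_on N a I f \<longleftrightarrow>
     (\<forall>x. (\<forall>k\<le>N. a k * x \<in> I) \<longrightarrow> (\<Sum>k\<le>N. f (a k * x)) = 0)"

definition m_of :: "nat \<Rightarrow> (nat \<Rightarrow> real) \<Rightarrow> nat" where
  "m_of N a = (LEAST m. (\<Sum>k<N. (a k / a N) ^ m) < 1)"

definition Cm_on :: "nat \<Rightarrow> real \<Rightarrow> real \<Rightarrow> (real \<Rightarrow> real) \<Rightarrow> bool" where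
  "Cm_on m \<alpha> \<beta> f \<longleftrightarrow>
     (\<exists>D :: nat \<Rightarrow> real \<Rightarrow> real.
        (\<forall>x\<in>{\<alpha>..\<beta>}. D 0 x = f x) \<and>
        (\<forall>k<m. \<forall>x\<in>{\<alpha>..\<beta>}. (D k has_real_derivative D (Suc k) x) (at x within {\<alpha>..\<beta>})) \<and>
        continuous_on {\<alpha>..\<beta>} (D m))"

end

theory Submission
  imports Defs
begin

lemma deriv_unique_real:
  fixes \<alpha> \<beta> :: real
  assumes "\<alpha> < \<beta>" "y \<in> {\<alpha>..\<beta>}"
    "(F has_real_derivative X) (at y within {\<alpha>..\<beta>})"
    "(F has_real_derivative Y) (at y within {\<alpha>..\<beta>})"
  shows "X = Y"
proof -
  have "(F has_vector_derivative X) (at y within cbox \<alpha> \<beta>)"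
       "(F has_vector_derivative Y) (at y within cbox \<alpha> \<beta>)"
    using assms by (simp_all add: has_real_derivative_iff_has_vector_derivative)
  then show ?thesis
    using vector_derivative_unique_within_closed_interval[of \<alpha> \<beta> y F X Y] assms by simp
qed

lemma a_mono:
  fixes a :: "nat \<Rightarrow> real"
  assumes "\<And>k. k < N \<Longrightarrow> a k < a (Suc k)"
  shows "i < j \<Longrightarrow> j \<le> N \<Longrightarrow> a i < a j"
proof (induction j)
  case 0 then show ?case by simp
next
  case (Suc j)
  show ?case
  proof (cases "i = j")
    case True then show ?thesis using assms Suc by simp
  next
    case False then show ?thesis using assms[of j] Suc by simp
  qed
qed

lemma core:
  fixes N :: nat and a :: "nat \<Rightarrow> real" and \<alpha> \<beta> :: real and m :: nat
  assumes "a 0 = 1"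
    and step: "\<And>k. k < N \<Longrightarrow> a k < a (Suc k)"
    and "\<alpha> \<le> 0" "0 \<le> \<beta>" "\<alpha> < \<beta>"
    and sol: "is_solution_on N a {\<alpha>..\<beta>} f"
    and cm: "Cm_on m \<alpha> \<beta> f"
    and q: "(\<Sum>k<N. (a k / a N) ^ m) < 1"
  shows "\<forall>x\<in>{\<alpha>..\<beta>}. f x = 0"
proof -
  define S where "S = {\<alpha>..\<beta>}"
  obtain D where D0: "\<forall>x\<in>S. D 0 x = f x"
    and Dd: "\<forall>k<m. \<forall>x\<in>S. (D k has_real_derivative D (Suc k) x) (at x within S)"
    and Dc: "continuous_on S (D m)"
    using cm unfolding Cm_on_def S_def by blast
  define c where "c k = a k / a N" for k
  have age: "k \<le> N \<Longrightarrow> 1 \<le> a k" for k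
    using a_mono[of N a, OF step, of 0 k] \<open>a 0 = 1\<close> by (cases k) auto
  have ale: "k \<le> N \<Longrightarrow> a k \<le> a N" for k
    using a_mono[of N a, OF step, of k N] by (cases "k = N") auto
  have cpos: "k \<le> N \<Longrightarrow> 0 < c k" for k
    using age[of k] age[of N] by (simp add: c_def)
  have cle: "k \<le> N \<Longrightarrow> c k \<le> 1" for k
    using ale[of k] age[of N] by (simp add: c_def)
  have cN: "c N = 1" using age[of N] by (simp add: c_def)
  have scale: "y \<in> S \<Longrightarrow> k \<le> N \<Longrightarrow> c k * y \<in> S" for y k
  proof -
    assume y: "y \<in> S" and k: "k \<le> N"
    have "0 < c k" "c k \<le> 1" using cpos[OF k] cle[OF k] by auto
    moreover have "\<alpha> \<le> y" "y \<le> \<beta>" using y by (auto simp: S_def)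
    ultimately have "\<alpha> \<le> c k * y \<and> c k * y \<le> \<beta>" using assms(3,4)
      by (cases "y \<ge> 0") (smt (verit) mult_left_le mult_nonneg_nonneg mult_le_cancel_right1 mult_nonneg_nonpos mult_left_le_one_le)+
    then show "c k * y \<in> S" by (simp add: S_def)
  qed
  have "0 \<in> S" using assms(3,4) by (simp add: S_def)
  have E0: "y \<in> S \<Longrightarrow> (\<Sum>k\<le>N. f (c k * y)) = 0" for y
  proof -
    assume y: "y \<in> S"
    have eq: "a k * (y / a N) = c k * y" for k by (simp add: c_def)
    have "\<forall>k\<le>N. a k * (y / a N) \<in> {\<alpha>..\<beta>}" using scale[OF y] eq S_def by auto
    then have "(\<Sum>k\<le>N. f (a k * (y / a N))) = 0" using sol unfolding is_solution_on_def by blast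
    then show ?thesis using eq by simp
  qed
  have Ej: "j \<le> m \<Longrightarrow> \<forall>y\<in>S. (\<Sum>k\<le>N. c k ^ j * D j (c k * y)) = 0" for j
  proof (induction j)
    case 0
    then show ?case using E0 D0 scale by simp
  next
    case (Suc j)
    then have jm: "j < m" by simp
    show ?case
    proof
      fix y assume y: "y \<in> S"
      have dk: "((\<lambda>y. c k ^ j * D j (c k * y)) has_real_derivative
                c k ^ j * (D (Suc j) (c k * y) * c k)) (at y within S)" if k: "k \<le> N" for k
      proof -
        have img: "(\<lambda>y. c k * y) ` S \<subseteq> S" using scale k by auto
        have "(D j has_real_derivative D (Suc j) (c k * y)) (at (c k * y) within S)"
          using Dd jm scale[OF y k] by blast
        then have "(D j has_real_derivative D (Suc j) (c k * y)) (at (c k * y) within (\<lambda>y. c k * y) ` S)"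
          using img by (rule has_field_derivative_subset)
        moreover have "((\<lambda>y. c k * y) has_real_derivative c k) (at y within S)"
          by (auto intro!: derivative_eq_intros)
        ultimately have "(D j \<circ> (\<lambda>y. c k * y) has_real_derivative D (Suc j) (c k * y) * c k) (at y within S)"
          by (rule DERIV_image_chain)
        then show ?thesis by (auto intro!: derivative_eq_intros simp: o_def)
      qed
      have F: "((\<lambda>y. \<Sum>k\<le>N. c k ^ j * D j (c k * y)) has_real_derivative
                (\<Sum>k\<le>N. c k ^ j * (D (Suc j) (c k * y) * c k))) (at y within S)"
        using dk by (intro DERIV_sum) auto
      have Z: "((\<lambda>y. \<Sum>k\<le>N. c k ^ j * D j (c k * y)) has_real_derivative 0) (at y within S)"
      proof (rule has_field_derivative_transform_within[where f="\<lambda>_. 0" and d=1])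
        show "((\<lambda>_. 0) has_real_derivative 0) (at y within S)" by simp
      qed (use y Suc jm in auto)
      have "(\<Sum>k\<le>N. c k ^ j * (D (Suc j) (c k * y) * c k)) = 0"
        using deriv_unique_real[OF assms(5) y[unfolded S_def] F[unfolded S_def] Z[unfolded S_def]] .
      then show "(\<Sum>k\<le>N. c k ^ Suc j * D (Suc j) (c k * y)) = 0"
        by (simp add: algebra_simps)
    qed
  qed
  define qq where "qq = (\<Sum>k<N. c k ^ m)"
  have qq1: "qq < 1" using q by (simp add: qq_def c_def)
  have gm: "\<forall>y\<in>S. D m y = 0"
  proof -
    have "compact S" "S \<noteq> {}" using \<open>0 \<in> S\<close> by (auto simp: S_def)
    moreover have "continuous_on S (\<lambda>y. \<bar>D m y\<bar>)" using Dc by (intro continuous_intros)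
    ultimately obtain y0 where y0: "y0 \<in> S" and mx: "\<forall>y\<in>S. \<bar>D m y\<bar> \<le> \<bar>D m y0\<bar>"
      using continuous_attains_sup by blast
    have "(\<Sum>k\<le>N. c k ^ m * D m (c k * y0)) = 0" using Ej y0 by auto
    then have "D m y0 = - (\<Sum>k<N. c k ^ m * D m (c k * y0))"
      using cN by (simp add: lessThan_Suc_atMost[symmetric])
    then have "\<bar>D m y0\<bar> \<le> (\<Sum>k<N. \<bar>c k ^ m * D m (c k * y0)\<bar>)"
      by (simp add: sum_abs)
    also have "\<dots> \<le> (\<Sum>k<N. c k ^ m * \<bar>D m y0\<bar>)"
    proof (rule sum_mono)
      fix k assume "k \<in> {..<N}"
      then have k: "k \<le> N" by simp
      have "\<bar>D m (c k * y0)\<bar> \<le> \<bar>D m y0\<bar>" using mx scale[OF y0 k] by blast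
      then show "\<bar>c k ^ m * D m (c k * y0)\<bar> \<le> c k ^ m * \<bar>D m y0\<bar>"
        using cpos[OF k] by (simp add: abs_mult mult_left_mono)
    qed
    also have "\<dots> = qq * \<bar>D m y0\<bar>" by (simp add: qq_def sum_distrib_right)
    finally have "\<bar>D m y0\<bar> \<le> qq * \<bar>D m y0\<bar>" .
    then have "\<bar>D m y0\<bar> = 0" using qq1
      by (smt (verit) mult_le_cancel_right1 abs_ge_zero)
    then show ?thesis using mx by fastforce
  qed
  have down: "i \<le> m \<Longrightarrow> \<forall>y\<in>S. D (m - i) y = 0" for i
  proof (induction i)
    case 0 then show ?case using gm by simp
  next
    case (Suc i)
    define j where "j = m - Suc i"
    have jm: "j < m" and sj: "Suc j = m - i" using Suc.prems by (auto simp: j_def)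
    have "\<forall>y\<in>S. (D j has_real_derivative 0) (at y within S)"
      using Dd jm Suc.IH Suc.prems sj by (metis Suc_leD)
    then obtain C where C: "\<forall>y\<in>S. D j y = C"
      using has_field_derivative_zero_constant[of S "D j"] by (auto simp: S_def)
    have "(\<Sum>k\<le>N. c k ^ j * D j (c k * 0)) = 0" using Ej[of j] jm \<open>0 \<in> S\<close> by fastforce
    then have "C * (\<Sum>k\<le>N. c k ^ j) = 0" using C \<open>0 \<in> S\<close>
      by (simp add: sum_distrib_left mult.commute)
    moreover have "(\<Sum>k\<le>N. c k ^ j) > 0"
    proof -
      have "(\<Sum>k\<le>N. c k ^ j) \<ge> c N ^ j"
        by (rule member_le_sum) (use cpos in \<open>auto intro: less_imp_le\<close>)
      then show ?thesis using cN by simp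
    qed
    ultimately have "C = 0" by simp
    then show ?case using C by (simp add: j_def)
  qed
  show ?thesis using down[of m] D0 by (simp add: S_def)
qed

theorem mainTheorem1:
  fixes N :: nat and a :: "nat \<Rightarrow> real" and \<delta> :: real
  assumes "N \<ge> 1"
    and "a 0 = 1"
    and "\<And>k. k < N \<Longrightarrow> a k < a (Suc k)"
    and "\<delta> > 0"
  shows "(\<forall>f. is_solution_on N a {0..\<delta>} f \<and> Cm_on (m_of N a) 0 \<delta> f
              \<longrightarrow> (\<forall>x\<in>{0..\<delta>}. f x = 0))
       \<and> (\<forall>f. is_solution_on N a {-\<delta>..0} f \<and> Cm_on (m_of N a) (-\<delta>) 0 f
              \<longrightarrow> (\<forall>x\<in>{-\<delta>..0}. f x = 0))"
proof -
  have age: "k \<le> N \<Longrightarrow> 1 \<le> a k" for k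
    using a_mono[of N a, OF assms(3), of 0 k] assms(2) by (cases k) auto
  have alt: "k < N \<Longrightarrow> a k < a N" for k
    using a_mono[of N a, OF assms(3), of k N] by auto
  have ex: "\<exists>m. (\<Sum>k<N. (a k / a N) ^ m) < 1"
  proof -
    have "(\<lambda>m. \<Sum>k<N. (a k / a N) ^ m) \<longlonglongrightarrow> (\<Sum>k<N. 0)"
    proof (intro tendsto_sum LIMSEQ_power_zero)
      fix k assume "k \<in> {..<N}"
      then have "1 \<le> a k" "a k < a N" using age alt by auto
      then show "norm (a k / a N) < 1" by simp
    qed
    then have "\<forall>\<^sub>F m in sequentially. (\<Sum>k<N. (a k / a N) ^ m) < 1"
      using order_tendstoD(2) by fastforce
    then show ?thesis by (simp add: eventually_sequentially) blast
  qed
  have q: "(\<Sum>k<N. (a k / a N) ^ m_of N a) < 1"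
    unfolding m_of_def using LeastI_ex[OF ex] .
  show ?thesis
  proof (intro conjI allI impI)
    fix f assume "is_solution_on N a {0..\<delta>} f \<and> Cm_on (m_of N a) 0 \<delta> f"
    then show "\<forall>x\<in>{0..\<delta>}. f x = 0"
      using core[OF assms(2) assms(3) _ _ _ _ _ q, of 0 \<delta> f] assms(4) by auto
  next
    fix f assume "is_solution_on N a {-\<delta>..0} f \<and> Cm_on (m_of N a) (-\<delta>) 0 f"
    then show "\<forall>x\<in>{-\<delta>..0}. f x = 0"
      using core[OF assms(2) assms(3) _ _ _ _ _ q, of "-\<delta>" 0 f] assms(4) by auto
  qed
qed

end
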